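(* Let $m>1$ be an odd integer. If $\mathbf{u}_1,\mathbf{u}_2$ are units of $H_{1,2,2}$ with $\mathbf{u}_1-\mathbf{u}_2\in mH_{1,2,2}$, then $\mathbf{u}_1=\mathbf{u}_2$.
   Context: Let $\mathbf{i},\mathbf{j},\mathbf{k}$ be the standard quaternion units. $H_{1,2,2}$ is the subring of the quaternions equal to the $\mathbb{Z}$-module generated by $\mathbf{v}_1=1$, $\mathbf{v}_2=\mathbf{i}$, $\mathbf{v}_3=\tfrac12(1+\mathbf{i}+\sqrt2\,\mathbf{j})$, $\mathbf{v}_4=\tfrac12(1+\mathbf{i}+\sqrt2\,\mathbf{k})$. A unit is an element invertible in $H_{1,2,2}$ (equivalently of quaternion norm 1). *)

theory Defs
  imports Complex_Main
begin

datatype quat = Quat (qre: real) (qi: real) (qj: real) (qk: real)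

definition qadd :: "quat \<Rightarrow> quat \<Rightarrow> quat" where
  "qadd x y = Quat (qre x + qre y) (qi x + qi y) (qj x + qj y) (qk x + qk y)"

definition qsub :: "quat \<Rightarrow> quat \<Rightarrow> quat" where
  "qsub x y = Quat (qre x - qre y) (qi x - qi y) (qj x - qj y) (qk x - qk y)"

definition qscale :: "real \<Rightarrow> quat \<Rightarrow> quat" where
  "qscale r x = Quat (r * qre x) (r * qi x) (r * qj x) (r * qk x)"

definition qmul :: "quat \<Rightarrow> quat \<Rightarrow> quat" where
  "qmul x y = Quat
     (qre x * qre y - qi x * qi y - qj x * qj y - qk x * qk y)
     (qre x * qi y + qi x * qre y + qj x * qk y - qk x * qj y)
     (qre x * qj y - qi x * qk y + qj x * qre y + qk x * qi y)
     (qre x * qk y + qi x * qj y - qj x * qi y + qk x * qre y)"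

definition qone :: quat where "qone = Quat 1 0 0 0"

definition v1 :: quat where "v1 = Quat 1 0 0 0"
definition v2 :: quat where "v2 = Quat 0 1 0 0"
definition v3 :: quat where "v3 = Quat (1/2) (1/2) (sqrt 2 / 2) 0"
definition v4 :: quat where "v4 = Quat (1/2) (1/2) 0 (sqrt 2 / 2)"

definition H122 :: "quat set" where
  "H122 = {qadd (qadd (qscale (of_int a) v1) (qscale (of_int b) v2))
                (qadd (qscale (of_int c) v3) (qscale (of_int d) v4))
           | a b c d :: int. True}"

definition H122_unit :: "quat \<Rightarrow> bool" where
  "H122_unit u \<longleftrightarrow> u \<in> H122 \<and> (\<exists>v\<in>H122. qmul u v = qone \<and> qmul v u = qone)"

definition mult_H122 :: "int \<Rightarrow> quat set" where
  "mult_H122 m = {qscale (of_int m) h | h. h \<in> H122}"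

end

theory Submission
  imports Defs
begin

definition NQ :: "quat \<Rightarrow> real" where
  "NQ q = qre q ^ 2 + qi q ^ 2 + qj q ^ 2 + qk q ^ 2"

lemma NQ_mul: "NQ (qmul x y) = NQ x * NQ y"
  unfolding NQ_def qmul_def by (simp add: power2_eq_square algebra_simps)

lemma NQ_nonneg: "NQ q \<ge> 0"
  unfolding NQ_def by simp

lemma NQ_zero: "NQ q = 0 \<Longrightarrow> q = Quat 0 0 0 0"
  unfolding NQ_def by (cases q) (simp add: add_nonneg_eq_0_iff)

lemma NQ_H: assumes "q \<in> H122" shows "\<exists>n::int. NQ q = of_int n"
proof -
  obtain a b c d :: int where q: "q = qadd (qadd (qscale (of_int a) v1) (qscale (of_int b) v2))
                (qadd (qscale (of_int c) v3) (qscale (of_int d) v4))"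
    using assms unfolding H122_def by blast
  have s: "sqrt 2 * sqrt 2 = (2::real)" by simp
  have "NQ q = of_int (a^2+b^2+(a+b)*(c+d) + c^2 + c*d + d^2)"
    unfolding q NQ_def qadd_def qscale_def v1_def v2_def v3_def v4_def
    by (simp add: power2_eq_square algebra_simps s)
  then show ?thesis by blast
qed

lemma unit_norm: assumes "H122_unit u" shows "NQ u = 1"
proof -
  obtain v where v: "v \<in> H122" "qmul u v = qone" and u: "u \<in> H122"
    using assms unfolding H122_unit_def by blast
  obtain n where n: "NQ u = of_int n" using NQ_H[OF u] by blast
  obtain k where k: "NQ v = of_int k" using NQ_H[OF v(1)] by blast
  have "NQ u * NQ v = 1" using NQ_mul[of u v] v(2) by (simp add: qone_def NQ_def)
  then have "n * k = 1" using n k by (metis of_int_eq_1_iff of_int_mult)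
  moreover have "n \<ge> 0" using n NQ_nonneg[of u] by simp
  ultimately have "n = 1" using pos_zmult_eq_1_iff_lemma[of n k] by auto
  then show ?thesis using n by simp
qed

theorem lemma33:
  fixes m :: int and u1 u2 :: quat
  assumes "m > 1" and "odd m"
    and "H122_unit u1" and "H122_unit u2"
    and "qsub u1 u2 \<in> mult_H122 m"
  shows "u1 = u2"
proof -
  obtain h where h: "h \<in> H122" "qsub u1 u2 = qscale (of_int m) h"
    using assms(5) unfolding mult_H122_def by blast
  have m3: "m \<ge> 3" using assms(1,2) by presburger
  have n1: "NQ u1 = 1" "NQ u2 = 1" using unit_norm assms(3,4) by auto
  have sq: "\<And>x y::real. (x - y)^2 \<le> 2*x^2 + 2*y^2"
  proof -
    fix x y :: real
    have "0 \<le> (x+y)^2" by simp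
    then show "(x - y)^2 \<le> 2*x^2 + 2*y^2" by (simp add: power2_eq_square algebra_simps)
  qed
  have le: "NQ (qsub u1 u2) \<le> 2 * NQ u1 + 2 * NQ u2"
    unfolding NQ_def qsub_def
    using add_mono[OF add_mono[OF add_mono[OF sq[of "qre u1" "qre u2"] sq[of "qi u1" "qi u2"]] sq[of "qj u1" "qj u2"]] sq[of "qk u1" "qk u2"]]
    by (simp add: algebra_simps)
  have eq: "NQ (qsub u1 u2) = of_int m ^ 2 * NQ h"
    unfolding h(2) NQ_def qscale_def by (simp add: power2_eq_square algebra_simps)
  obtain n where n: "NQ h = of_int n" using NQ_H[OF h(1)] by blast
  have "n \<ge> 0" using n NQ_nonneg[of h] by simp
  have "n = 0"
  proof (rule ccontr)
    assume "n \<noteq> 0"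
    then have "n \<ge> 1" using \<open>n \<ge> 0\<close> by simp
    have "(3::real)^2 \<le> of_int m ^ 2" using m3 by (intro power_mono) auto
    moreover have "(1::real) \<le> NQ h" using n \<open>n \<ge> 1\<close> by simp
    ultimately have "9 \<le> of_int m ^ 2 * NQ h"
      using mult_mono[of "(3::real)^2" "of_int m ^ 2" 1 "NQ h"] by simp
    then show False using eq le n1 by simp
  qed
  then have "h = Quat 0 0 0 0" using NQ_zero n by simp
  then have "qsub u1 u2 = Quat 0 0 0 0" using h(2) by (simp add: qscale_def)
  then show ?thesis unfolding qsub_def by (cases u1, cases u2) simp
qed

end
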